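(* Let $V$ be a vertex algebra and $M$ a subspace of $V$ with $\mathcal{D}(V)\subseteq M$. Then for $u\in V$, $u\in lsr_{0,-1}(M)$ if and only if $u\in rsr_{0,-1}(M)$. In particular $lsr_{0,-1}(M)=rsr_{0,-1}(M)=sr_{0,-1}(M)$.
   Context: A vertex algebra $(V,Y,\mathbf{1})$ is over $\mathbb{C}$; for $u\in V$ write $Y(u,z)=\sum_{n\in\mathbb{Z}}u_nz^{-n-1}$ with $u_n\in\operatorname{End}V$. $\mathcal{D}$ is the linear operator $\mathcal{D}(v)=v_{-2}\mathbf{1}$. Iterated products are nested to the right: $v_{n_1}\cdots v_{n_t}v=v_{n_1}(\cdots(v_{n_t}v))$. For a subspace $M\subseteq V$: $lsr_{0,-1}(M)$ is the set of $v\in V$ such that for every $b\in V$ there is $m\ge0$ with $b_sv_{n_1}\cdots v_{n_t}v\in M$ for all $t\ge m$ and all $s,n_1,\dots,n_t\in\{0,-1\}$. $rsr_{0,-1}(M)$ is the set of $v\in V$ such that for every $w\in V$ there is $m\ge 0$ with $(v_{n_1}\cdots v_{n_t}v)_nw\in M$ for all $t\ge m$ and all $n,n_1,\dots,n_t\in\{0,-1\}$. $sr_{0,-1}(M)=lsr_{0,-1}(M)\cap rsr_{0,-1}(M)$. *)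

theory Defs
  imports Complex_Main "HOL-Library.Groups_Big_Fun"
begin

text \<open>A vertex algebra over the complex numbers, given by its modes:
  mode u n v stands for u_n v, where Y(u,z) = sum_n u_n z^(-n-1),
  and one is the vacuum vector. Sums over i in the Borcherds identity are finitely
  supported by truncation and are expressed with Sum_any.\<close>

definition vertex_algebra :: "(complex \<Rightarrow> 'v::ab_group_add \<Rightarrow> 'v) \<Rightarrow> ('v \<Rightarrow> int \<Rightarrow> 'v \<Rightarrow> 'v) \<Rightarrow> 'v \<Rightarrow> bool" where
  "vertex_algebra smul mode one \<longleftrightarrow>
     vector_space smul \<and>
     (\<forall>u n. Vector_Spaces.linear smul smul (mode u n)) \<and>
     (\<forall>n v. Vector_Spaces.linear smul smul (\<lambda>u. mode u n v)) \<and>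
     (\<forall>u v. \<exists>N. \<forall>n\<ge>N. mode u n v = 0) \<and>
     (\<forall>n v. mode one n v = (if n = -1 then v else 0)) \<and>
     (\<forall>u. mode u (-1) one = u) \<and>
     (\<forall>u n. n \<ge> 0 \<longrightarrow> mode u n one = 0) \<and>
     (\<forall>u v w (p::int) (q::int) (r::int).
        (\<Sum>i::nat. smul ((of_int p :: complex) gchoose i) (mode (mode u (r + int i) v) (p + q - int i) w))
        = (\<Sum>i::nat. smul ((-1::complex) ^ i * ((of_int r :: complex) gchoose i))
              (mode u (p + r - int i) (mode v (q + int i) w)
               - smul ((-1::complex) powi r) (mode v (q + r - int i) (mode u (p + int i) w)))))"

definition VD :: "('v \<Rightarrow> int \<Rightarrow> 'v \<Rightarrow> 'v) \<Rightarrow> 'v \<Rightarrow> 'v \<Rightarrow> 'v" where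
  "VD mode one v = mode v (-2) one"

definition iprod :: "('v \<Rightarrow> int \<Rightarrow> 'v \<Rightarrow> 'v) \<Rightarrow> 'v \<Rightarrow> int list \<Rightarrow> 'v \<Rightarrow> 'v" where
  "iprod mode v ns x = foldr (\<lambda>n y. mode v n y) ns x"

definition lsr :: "('v \<Rightarrow> int \<Rightarrow> 'v \<Rightarrow> 'v) \<Rightarrow> 'v set \<Rightarrow> 'v set" where
  "lsr mode M = {v. \<forall>b. \<exists>m::nat. \<forall>s ns. length ns \<ge> m \<longrightarrow> s \<in> {0, -1} \<longrightarrow> set ns \<subseteq> {0, -1}
       \<longrightarrow> mode b s (iprod mode v ns v) \<in> M}"

definition rsr :: "('v \<Rightarrow> int \<Rightarrow> 'v \<Rightarrow> 'v) \<Rightarrow> 'v set \<Rightarrow> 'v set" where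
  "rsr mode M = {v. \<forall>w. \<exists>m::nat. \<forall>n ns. length ns \<ge> m \<longrightarrow> n \<in> {0, -1} \<longrightarrow> set ns \<subseteq> {0, -1}
       \<longrightarrow> mode (iprod mode v ns v) n w \<in> M}"

definition sr :: "('v \<Rightarrow> int \<Rightarrow> 'v \<Rightarrow> 'v) \<Rightarrow> 'v set \<Rightarrow> 'v set" where
  "sr mode M = lsr mode M \<inter> rsr mode M"

end

theory Submission
  imports Defs
begin

lemma lin0:
  assumes "Vector_Spaces.linear s s f"
  shows "f 0 = 0"
proof -
  have "\<forall>x y. f (x + y) = f x + f y" using assms unfolding Vector_Spaces.linear_iff by blast
  then have "f (0 + 0) = f 0 + f 0" by blast
  then show ?thesis by simp
qed

lemma Sum_any_in_sub:
  assumes "module.subspace smul M" "module smul" "\<And>i. f i \<in> M"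
  shows "Sum_any f \<in> M"
  unfolding Sum_any.expand_set
  by (rule module.subspace_sum[OF assms(2) assms(1)]) (use assms(3) in auto)

lemma Sum_any_single:
  assumes "\<And>i. i \<noteq> a \<Longrightarrow> f i = 0"
  shows "Sum_any f = (f a :: 'a::comm_monoid_add)"
proof -
  have "Sum_any f = sum f {a}"
    by (rule Sum_any.expand_superset) (use assms in auto)
  then show ?thesis by simp
qed

lemma key:
  fixes smul :: "complex \<Rightarrow> 'v::ab_group_add \<Rightarrow> 'v"
    and mode :: "'v \<Rightarrow> int \<Rightarrow> 'v \<Rightarrow> 'v" and one :: 'v
    and M :: "'v set"
  assumes VA: "vertex_algebra smul mode one"
    and S: "module.subspace smul M"
    and D: "\<forall>v. VD mode one v \<in> M"
  shows "mode x 0 y + mode y 0 x \<in> M" "mode x (-1) y - mode y (-1) x \<in> M"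
proof -
  have vs: "vector_space smul" using VA by (simp add: vertex_algebra_def)
  then have md: "module smul" by (simp add: module_iff_vector_space)
  have lin: "\<And>u n. Vector_Spaces.linear smul smul (mode u n)" using VA by (simp add: vertex_algebra_def)
  have m0: "\<And>u n. mode u n 0 = 0" using lin lin0 by metis
  have vac: "\<And>n v. mode one n v = (if n = -1 then v else 0)" using VA by (simp add: vertex_algebra_def)
  have cre: "\<And>u. mode u (-1) one = u" using VA by (simp add: vertex_algebra_def)
  have ann: "\<And>u n. n \<ge> 0 \<Longrightarrow> mode u n one = 0" using VA by (simp add: vertex_algebra_def)
  have B: "\<And>u v w (p::int) (q::int) (r::int).
        (\<Sum>i::nat. smul ((of_int p :: complex) gchoose i) (mode (mode u (r + int i) v) (p + q - int i) w))
        = (\<Sum>i::nat. smul ((-1::complex) ^ i * ((of_int r :: complex) gchoose i))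
              (mode u (p + r - int i) (mode v (q + int i) w)
               - smul ((-1::complex) powi r) (mode v (q + r - int i) (mode u (p + int i) w))))"
    using VA unfolding vertex_algebra_def by blast
  have s0: "\<And>x. smul 0 x = 0" using module.scale_zero_left[OF md] by blast
  have s1: "\<And>x. smul 1 x = x" using module.scale_one[OF md] by blast
  have sz: "\<And>c. smul c 0 = 0" using module.scale_zero_right[OF md] by blast
  have sm: "\<And>x. smul (-1) x = - x" using module.scale_minus_left[OF md] s1 by metis
  have ss: "\<And>a b x. smul a (smul b x) = smul (a*b) x" using module.scale_scale[OF md] by blast
  have neg: "mode x (- int n - 2) one \<in> M" for x n
  proof -
    define r :: int where "r = - int n - 1"
    have L: "(\<Sum>i::nat. smul ((of_int 0 :: complex) gchoose i) (mode (mode x (r + int i) one) (0 + (-2) - int i) one))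
           = mode (mode x r one) (-2) one"
    proof (subst Sum_any_single[where a=0])
      fix i :: nat assume "i \<noteq> 0"
      then have "(of_int 0 :: complex) gchoose i = 0" by (simp add: gbinomial_0_left)
      then show "smul ((of_int 0 :: complex) gchoose i) (mode (mode x (r + int i) one) (0 + (-2) - int i) one) = 0"
        by (simp only: s0)
    next
      have c: "(of_int 0 :: complex) gchoose 0 = 1" by simp
      have d: "0 + (-2) - int 0 = -2" "0 + (-2) - (0::int) = -2" by simp_all
      show "smul ((of_int 0 :: complex) gchoose 0) (mode (mode x (r + int 0) one) (0 + (-2) - int 0) one) = mode (mode x r one) (-2) one"
        by (simp only: c d s1 of_nat_0 add_0_right add_0_left diff_zero)
    qed
    have R: "(\<Sum>i::nat. smul ((-1::complex) ^ i * ((of_int r :: complex) gchoose i))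
              (mode x (0 + r - int i) (mode one ((-2) + int i) one)
               - smul ((-1::complex) powi r) (mode one ((-2) + r - int i) (mode x (0 + int i) one))))
           = smul (- of_int r) (mode x (r - 1) one)"
    proof (subst Sum_any_single[where a=1])
      fix i :: nat assume "i \<noteq> 1"
      then show "smul ((-1::complex) ^ i * ((of_int r :: complex) gchoose i))
              (mode x (0 + r - int i) (mode one ((-2) + int i) one)
               - smul ((-1::complex) powi r) (mode one ((-2) + r - int i) (mode x (0 + int i) one))) = 0"
      proof -
        have a: "mode x (0 + int i) one = 0" by (rule ann) simp
        have b: "mode one ((-2) + int i) one = 0" using \<open>i \<noteq> 1\<close> by (simp only: vac) auto
        show ?thesis by (simp only: a b m0 sz diff_zero)
      qed
    next
      show "smul ((-1::complex) ^ 1 * ((of_int r :: complex) gchoose 1))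
              (mode x (0 + r - int 1) (mode one ((-2) + int 1) one)
               - smul ((-1::complex) powi r) (mode one ((-2) + r - int 1) (mode x (0 + int 1) one)))
           = smul (- of_int r) (mode x (r - 1) one)"
      proof -
        have a: "mode x (0 + int 1) one = 0" by (rule ann) simp
        have b: "mode one ((-2) + int 1) one = one" by (simp only: vac) simp
        have c: "(-1::complex) ^ 1 * ((of_int r :: complex) gchoose 1) = - of_int r" by simp
        have d: "0 + r - int 1 = r - 1" by simp
        show ?thesis by (simp only: a b c d m0 sz diff_zero)
      qed
    qed
    have E: "mode (mode x r one) (-2) one = smul (of_nat n + 1) (mode x (- int n - 2) one)"
    proof -
      have "mode (mode x r one) (-2) one = smul (- of_int r) (mode x (r - 1) one)"
        using B[of 0 x r one "-2" one] by (simp only: L R)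
      moreover have "- (of_int r :: complex) = of_nat n + 1" "r - 1 = - int n - 2" by (simp_all add: r_def)
      ultimately show ?thesis by (simp only:)
    qed
    have "mode (mode x r one) (-2) one \<in> M" using D by (simp add: VD_def)
    then have "smul (1 / (of_nat n + 1)) (smul (of_nat n + 1) (mode x (- int n - 2) one)) \<in> M"
      unfolding E[symmetric] by (rule module.subspace_scale[OF md S])
    moreover have nz: "(of_nat n + 1 :: complex) \<noteq> 0"
      by (metis of_nat_Suc of_nat_eq_0_iff Suc_neq_Zero add.commute)
    then have "(1 / (of_nat n + 1)) * (of_nat n + 1 :: complex) = 1"
      by simp
    ultimately show ?thesis by (simp only: ss s1)
  qed
  have gen: "mode x (r - 1) y - smul ((-1::complex) powi r) (mode y (r - 1) x) \<in> M" for r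
  proof -
    have L: "(\<Sum>i::nat. smul ((of_int (-1) :: complex) gchoose i) (mode (mode x (r + int i) y) ((-1) + (-1) - int i) one)) \<in> M"
    proof (rule Sum_any_in_sub[OF S md])
      fix i
      have "mode (mode x (r + int i) y) ((-1) + (-1) - int i) one \<in> M"
      proof -
        have e: "(-1) + (-1) - int i = - int i - 2" by simp
        show ?thesis unfolding e by (rule neg)
      qed
      then show "smul ((of_int (-1) :: complex) gchoose i) (mode (mode x (r + int i) y) ((-1) + (-1) - int i) one) \<in> M"
        using module.subspace_scale[OF md S] by blast
    qed
    have R: "(\<Sum>i::nat. smul ((-1::complex) ^ i * ((of_int r :: complex) gchoose i))
              (mode x ((-1) + r - int i) (mode y ((-1) + int i) one)
               - smul ((-1::complex) powi r) (mode y ((-1) + r - int i) (mode x ((-1) + int i) one))))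
           = mode x (r - 1) y - smul ((-1::complex) powi r) (mode y (r - 1) x)"
    proof (subst Sum_any_single[where a=0])
      fix i :: nat assume "i \<noteq> 0"
      then show "smul ((-1::complex) ^ i * ((of_int r :: complex) gchoose i))
              (mode x ((-1) + r - int i) (mode y ((-1) + int i) one)
               - smul ((-1::complex) powi r) (mode y ((-1) + r - int i) (mode x ((-1) + int i) one))) = 0"
      proof -
        have a: "mode x ((-1) + int i) one = 0" by (rule ann) (use \<open>i \<noteq> 0\<close> in simp)
        have b: "mode y ((-1) + int i) one = 0" by (rule ann) (use \<open>i \<noteq> 0\<close> in simp)
        show ?thesis by (simp only: a b m0 sz diff_zero)
      qed
    next
      show "smul ((-1::complex) ^ 0 * ((of_int r :: complex) gchoose 0))
              (mode x ((-1) + r - int 0) (mode y ((-1) + int 0) one)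
               - smul ((-1::complex) powi r) (mode y ((-1) + r - int 0) (mode x ((-1) + int 0) one)))
           = mode x (r - 1) y - smul ((-1::complex) powi r) (mode y (r - 1) x)"
      proof -
        have a: "mode x ((-1) + int 0) one = x" using cre by simp
        have b: "mode y ((-1) + int 0) one = y" using cre by simp
        have c: "(-1::complex) ^ 0 * ((of_int r :: complex) gchoose 0) = 1" by simp
        have d: "(-1) + r - int 0 = r - 1" by simp
        show ?thesis by (simp only: a b c d s1)
      qed
    qed
    have "(\<Sum>i::nat. smul ((of_int (-1) :: complex) gchoose i) (mode (mode x (r + int i) y) ((-1) + (-1) - int i) one)) = mode x (r - 1) y - smul ((-1::complex) powi r) (mode y (r - 1) x)"
      using B[of "-1" x r y "-1" one] by (simp only: R)
    then show ?thesis using L by (simp only:)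
  qed
  show "mode x 0 y + mode y 0 x \<in> M" using gen[of 1] by (simp add: sm)
  show "mode x (-1) y - mode y (-1) x \<in> M" using gen[of 0] by (simp add: s1)
qed


lemma swapM:
  fixes smul :: "complex \<Rightarrow> 'v::ab_group_add \<Rightarrow> 'v"
    and mode :: "'v \<Rightarrow> int \<Rightarrow> 'v \<Rightarrow> 'v" and one :: 'v
    and M :: "'v set"
  assumes VA: "vertex_algebra smul mode one"
    and S: "module.subspace smul M"
    and D: "\<forall>v. VD mode one v \<in> M"
    and s: "s \<in> {0, -1}"
  shows "mode x s y \<in> M \<longleftrightarrow> mode y s x \<in> M"
proof -
  have md: "module smul" using VA by (simp add: vertex_algebra_def module_iff_vector_space)
  note k = key[OF VA S D]
  have add: "\<And>a b. a \<in> M \<Longrightarrow> b \<in> M \<Longrightarrow> a + b \<in> M" using module.subspace_add[OF md S] by blast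
  have dif: "\<And>a b. a \<in> M \<Longrightarrow> b \<in> M \<Longrightarrow> a - b \<in> M" using module.subspace_diff[OF md S] by blast
  show ?thesis
  proof (cases "s = 0")
    case True
    have 1: "mode x 0 y + mode y 0 x \<in> M" "mode y 0 x + mode x 0 y \<in> M" using k(1) by blast+
    have "mode y 0 x = (mode x 0 y + mode y 0 x) - mode x 0 y" "mode x 0 y = (mode y 0 x + mode x 0 y) - mode y 0 x" by simp_all
    then show ?thesis using True 1 dif by metis
  next
    case False
    then have sv: "s = -1" using s by simp
    have 1: "mode x (-1) y - mode y (-1) x \<in> M" "mode y (-1) x - mode x (-1) y \<in> M" using k(2) by blast+
    have "mode y (-1) x = mode x (-1) y - (mode x (-1) y - mode y (-1) x)" "mode x (-1) y = mode y (-1) x - (mode y (-1) x - mode x (-1) y)" by simp_all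
    then show ?thesis using sv 1 dif by metis
  qed
qed

lemma lsr_rsr:
  fixes smul :: "complex \<Rightarrow> 'v::ab_group_add \<Rightarrow> 'v"
    and mode :: "'v \<Rightarrow> int \<Rightarrow> 'v \<Rightarrow> 'v" and one :: 'v
    and M :: "'v set"
  assumes VA: "vertex_algebra smul mode one"
    and S: "module.subspace smul M"
    and D: "\<forall>v. VD mode one v \<in> M"
  shows "lsr mode M = rsr mode M"
proof -
  have "\<And>b s X. s \<in> {0, -1} \<Longrightarrow> mode b s X \<in> M \<longleftrightarrow> mode X s b \<in> M"
    using swapM[OF VA S D] by blast
  then show ?thesis unfolding lsr_def rsr_def by (auto; metis)
qed

theorem mainTheorem3:
  fixes smul :: "complex \<Rightarrow> 'v::ab_group_add \<Rightarrow> 'v"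
    and mode :: "'v \<Rightarrow> int \<Rightarrow> 'v \<Rightarrow> 'v" and one :: 'v
    and M :: "'v set" and u :: 'v
  assumes "vertex_algebra smul mode one"
    and "module.subspace smul M"
    and "\<forall>v. VD mode one v \<in> M"
  shows "(u \<in> lsr mode M \<longleftrightarrow> u \<in> rsr mode M) \<and> lsr mode M = rsr mode M \<and> rsr mode M = sr mode M"
  using lsr_rsr[OF assms] unfolding sr_def by simp

end
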